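(* Let $(\lambda_m)_{m\in\mathbb{N}_0}$ be real numbers, $\gamma>0$, $f\in C^\infty[x_0,x_0+\gamma]$ complex-valued, and $0<2\delta<\gamma$. Then for every $m\in\mathbb{N}_0$ and all $x\in[x_0,x_0+\delta]$, $$|D^{(2m+1)}f(x)|\le 2\max\left\{\tfrac2\delta,\delta\right\}e^{(|\lambda_{2m}|+|\lambda_{2m+1}|)\delta}\left(\max_{t\in[x_0,x_0+2\delta]}|D^{(2m)}f(t)|+\max_{t\in[x_0,x_0+2\delta]}|D^{(2m+2)}f(t)|\right).$$
   Context: $D^{(n)}f=(\frac{d}{dt}-\lambda_0)\cdots(\frac{d}{dt}-\lambda_{n-1})f$ with $D^{(0)}f=f$ (one-sided derivatives at endpoints). *)

theory Defs
  imports "HOL-Analysis.Analysis"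
begin

definition smooth_on_interval :: "real \<Rightarrow> real \<Rightarrow> (real \<Rightarrow> complex) \<Rightarrow> bool" where
  "smooth_on_interval a b f \<longleftrightarrow>
     (\<exists>g :: nat \<Rightarrow> real \<Rightarrow> complex. g 0 = f \<and>
        (\<forall>k. \<forall>x\<in>{a..b}. (g k has_vector_derivative g (Suc k) x) (at x within {a..b})))"

text \<open>Dop lam S n f = (d/dt - lam 0) ((d/dt - lam 1) ( ... (d/dt - lam (n-1)) f)),
  derivatives taken within the set S.\<close>
fun Dop :: "(nat \<Rightarrow> real) \<Rightarrow> real set \<Rightarrow> nat \<Rightarrow> (real \<Rightarrow> complex) \<Rightarrow> real \<Rightarrow> complex" where
  "Dop lam S 0 f = f"
| "Dop lam S (Suc n) f =
     (\<lambda>x. vector_derivative (Dop (\<lambda>k. lam (Suc k)) S n f) (at x within S)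
          - complex_of_real (lam 0) * Dop (\<lambda>k. lam (Suc k)) S n f x)"

end

theory Submission
  imports Defs
begin

definition sm :: "real set \<Rightarrow> (real \<Rightarrow> complex) \<Rightarrow> bool" where
  "sm S h \<longleftrightarrow> (\<exists>g. (\<forall>x\<in>S. g 0 x = h x) \<and>
     (\<forall>k. \<forall>x\<in>S. (g k has_vector_derivative g (Suc k) x) (at x within S)))"

lemma vd_eq:
  fixes F G :: "real \<Rightarrow> complex"
  assumes "lo < hi" "x \<in> {lo..hi}" "\<And>y. y \<in> {lo..hi} \<Longrightarrow> F y = G y"
    and "(G has_vector_derivative D) (at x within {lo..hi})"
  shows "vector_derivative F (at x within {lo..hi}) = D"
proof -
  have "(F has_vector_derivative D) (at x within {lo..hi})"
    using has_vector_derivative_transform[OF assms(2) assms(3) assms(4)] .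
  then show ?thesis by (rule vector_derivative_within_closed_interval[OF assms(1,2)])
qed

lemma sm_step:
  assumes "lo < hi" "sm {lo..hi} h"
  shows "sm {lo..hi} (\<lambda>x. vector_derivative h (at x within {lo..hi}) - c * h x)"
proof -
  obtain g where g0: "\<forall>x\<in>{lo..hi}. g 0 x = h x"
    and gd: "\<forall>k. \<forall>x\<in>{lo..hi}. (g k has_vector_derivative g (Suc k) x) (at x within {lo..hi})"
    using assms(2) unfolding sm_def by blast
  have vd: "vector_derivative h (at x within {lo..hi}) = g 1 x" if "x \<in> {lo..hi}" for x
    using vd_eq[OF assms(1) that, of h "g 0"] g0 gd that by auto
  show ?thesis unfolding sm_def
  proof (intro exI[of _ "\<lambda>k x. g (Suc k) x - c * g k x"] conjI ballI allI)
    fix x assume "x \<in> {lo..hi}"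
    then show "g (Suc 0) x - c * g 0 x = vector_derivative h (at x within {lo..hi}) - c * h x"
      using vd g0 by simp
  next
    fix k x assume x: "x \<in> {lo..hi}"
    show "((\<lambda>x. g (Suc k) x - c * g k x) has_vector_derivative
       g (Suc (Suc k)) x - c * g (Suc k) x) (at x within {lo..hi})"
      using gd x by (auto intro!: has_vector_derivative_diff has_vector_derivative_mult_right)
  qed
qed

lemma sm_Dop:
  assumes "lo < hi" "sm {lo..hi} f"
  shows "sm {lo..hi} (Dop lam {lo..hi} n f)"
  using assms(2)
proof (induction n arbitrary: lam)
  case 0 then show ?case by simp
next
  case (Suc n)
  show ?case using sm_step[OF assms(1) Suc.IH[OF Suc.prems]] by simp
qed

lemma sm_deriv:
  assumes "lo < hi" "sm {lo..hi} h" "x \<in> {lo..hi}"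
  shows "(h has_vector_derivative vector_derivative h (at x within {lo..hi})) (at x within {lo..hi})"
proof -
  obtain g where g0: "\<forall>x\<in>{lo..hi}. g 0 x = h x"
    and gd: "\<forall>k. \<forall>x\<in>{lo..hi}. (g k has_vector_derivative g (Suc k) x) (at x within {lo..hi})"
    using assms(2) unfolding sm_def by blast
  have "(h has_vector_derivative g 1 x) (at x within {lo..hi})"
    using has_vector_derivative_transform[OF assms(3), of h "g 0"] g0 gd assms(3) by auto
  then show ?thesis using vector_derivative_works by (metis differentiableI_vector)
qed

lemma Dop_last:
  assumes "lo < hi" "sm {lo..hi} f"
  shows "\<forall>x\<in>{lo..hi}. Dop lam {lo..hi} (Suc n) f x =
     vector_derivative (Dop lam {lo..hi} n f) (at x within {lo..hi}) - of_real (lam n) * Dop lam {lo..hi} n f x"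
proof (induction n arbitrary: lam)
  case 0 then show ?case by simp
next
  case (Suc n)
  let ?S = "{lo..hi}"
  let ?l = "\<lambda>k. lam (Suc k)"
  let ?h = "Dop ?l ?S n f"
  have smh: "sm ?S ?h" using sm_Dop[OF assms] .
  obtain g where g0: "\<forall>x\<in>?S. g 0 x = ?h x"
    and gd: "\<forall>k. \<forall>x\<in>?S. (g k has_vector_derivative g (Suc k) x) (at x within ?S)"
    using smh unfolding sm_def by blast
  have vdh: "vector_derivative ?h (at x within ?S) = g 1 x" if "x \<in> ?S" for x
    using vd_eq[OF assms(1) that, of ?h "g 0"] g0 gd that by auto
  have IH: "\<forall>x\<in>?S. Dop ?l ?S (Suc n) f x = g 1 x - of_real (lam (Suc n)) * g 0 x"
    using Suc.IH[of ?l] vdh g0 by auto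
  have e1: "Dop lam ?S (Suc n) f x = g 1 x - of_real (lam 0) * g 0 x" if "x \<in> ?S" for x
    using vdh[OF that] g0 that by simp
  show ?case
  proof
    fix x assume x: "x \<in> ?S"
    have A: "vector_derivative (Dop ?l ?S (Suc n) f) (at x within ?S)
       = g 2 x - of_real (lam (Suc n)) * g 1 x"
      apply (rule vd_eq[OF assms(1) x, of _ "\<lambda>y. g 1 y - of_real (lam (Suc n)) * g 0 y"])
      using IH apply blast
      using gd x by (auto intro!: has_vector_derivative_diff has_vector_derivative_mult_right
          simp: numeral_2_eq_2)
    have B: "vector_derivative (Dop lam ?S (Suc n) f) (at x within ?S)
       = g 2 x - of_real (lam 0) * g 1 x"
      apply (rule vd_eq[OF assms(1) x, of _ "\<lambda>y. g 1 y - of_real (lam 0) * g 0 y"])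
      using e1 apply blast
      using gd x by (auto intro!: has_vector_derivative_diff has_vector_derivative_mult_right
          simp: numeral_2_eq_2)
    have "Dop lam ?S (Suc (Suc n)) f x = vector_derivative (Dop ?l ?S (Suc n) f) (at x within ?S)
       - of_real (lam 0) * Dop ?l ?S (Suc n) f x" by simp
    also have "\<dots> = g 2 x - of_real (lam (Suc n)) * g 1 x - of_real (lam 0) * (g 1 x - of_real (lam (Suc n)) * g 0 x)"
      using A IH x by simp
    also have "\<dots> = (g 2 x - of_real (lam 0) * g 1 x) - of_real (lam (Suc n)) * (g 1 x - of_real (lam 0) * g 0 x)"
      by (simp add: algebra_simps)
    also have "\<dots> = vector_derivative (Dop lam ?S (Suc n) f) (at x within ?S) - of_real (lam (Suc n)) * Dop lam ?S (Suc n) f x"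
      using B e1[OF x] by simp
    finally show "Dop lam ?S (Suc (Suc n)) f x = vector_derivative (Dop lam ?S (Suc n) f) (at x within ?S) - of_real (lam (Suc n)) * Dop lam ?S (Suc n) f x" .
  qed
qed


lemma Q_bound:
  fixes v w :: "real \<Rightarrow> complex" and b x t W :: real
  assumes xt: "x \<le> t" and tT: "t \<le> x + d"
    and dv: "\<forall>s\<in>{x..x+d}. (v has_vector_derivative (w s + of_real b * v s)) (at s within {x..x+d})"
    and Wb: "\<forall>s\<in>{x..x+d}. cmod (w s) \<le> W"
  shows "cmod (of_real (exp (-b*(t-x))) * v t - v x) \<le> W * exp (max 0 (-b*(t-x))) * (t-x)"
proof (cases "x = t")
  case True then show ?thesis by simp
next
  case False
  then have xlt: "x < t" using xt by simp
  define Q where "Q s = of_real (exp (-b*(s-x))) * v s" for s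
  define B where "B = W * exp (max 0 (-b*(t-x)))"
  have dQ: "(Q has_vector_derivative of_real (exp (-b*(s-x))) * w s) (at s)" if "x < s" "s < t" for s
  proof -
    have s: "s \<in> {x..x+d}" using that tT by auto
    have "at s within {x..x+d} = at s" using that tT by (intro at_within_Icc_at) auto
    then have dvs: "(v has_vector_derivative (w s + of_real b * v s)) (at s)" using dv s by metis
    have "((\<lambda>s. of_real (exp (-b*(s-x)))) has_vector_derivative of_real (exp (-b*(s-x)) * (-b))) (at s)"
      by (auto intro!: derivative_eq_intros)
    from has_vector_derivative_mult[OF this dvs] show ?thesis unfolding Q_def
      by (rule has_vector_derivative_eq_rhs) (simp add: algebra_simps)
  qed
  have contQ: "continuous_on {x..t} Q"
  proof -
    have "continuous_on {x..x+d} v" by (rule continuous_on_vector_derivative) (use dv in blast)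
    then have "continuous_on {x..t} v" by (rule continuous_on_subset) (use tT in auto)
    then show ?thesis unfolding Q_def by (intro continuous_intros)
  qed
  have "cmod (Q t - Q x) \<le> B * t - B * x"
  proof (rule differentiable_bound_general[OF xlt contQ _ dQ])
    show "continuous_on {x..t} (\<lambda>s. B * s)" by (intro continuous_intros)
    show "((\<lambda>s. B * s) has_vector_derivative B) (at s)" for s
      by (auto intro!: derivative_eq_intros simp: has_real_derivative_iff_has_vector_derivative[symmetric])
    fix s assume s: "x < s" "s < t"
    have "cmod (of_real (exp (-b*(s-x))) * w s) = exp (-b*(s-x)) * cmod (w s)"
      by (simp add: norm_mult)
    also have "\<dots> \<le> exp (max 0 (-b*(t-x))) * W"
    proof (rule mult_mono)
      have "-b*(s-x) \<le> max 0 (-b*(t-x))"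
      proof (cases "b \<ge> 0")
        case True then show ?thesis using s by (simp add: mult_nonneg_nonneg)
      next
        case False then have "-b*(s-x) \<le> -b*(t-x)" using s by (intro mult_left_mono) auto
        then show ?thesis by simp
      qed
      then show "exp (-b*(s-x)) \<le> exp (max 0 (-b*(t-x)))" by simp
      show "cmod (w s) \<le> W" using Wb s tT by auto
    qed auto
    finally show "cmod (of_real (exp (-b*(s-x))) * w s) \<le> B" by (simp add: B_def mult.commute)
  qed
  then show ?thesis by (simp add: Q_def B_def algebra_simps)
qed


lemma core:
  fixes u v w :: "real \<Rightarrow> complex" and a b x d U W :: real
  assumes dpos: "d > 0"
    and du: "\<forall>s\<in>{x..x+d}. (u has_vector_derivative (v s + of_real a * u s)) (at s within {x..x+d})"
    and dv: "\<forall>s\<in>{x..x+d}. (v has_vector_derivative (w s + of_real b * v s)) (at s within {x..x+d})"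
    and Ub: "\<forall>s\<in>{x..x+d}. cmod (u s) \<le> U"
    and Wb: "\<forall>s\<in>{x..x+d}. cmod (w s) \<le> W"
  shows "cmod (v x) \<le> 2*U*exp((\<bar>a\<bar>+\<bar>b\<bar>)*d)/d + d*W*exp((\<bar>a\<bar>+\<bar>b\<bar>)*d)"
proof -
  define T where "T = {x..x+d}"
  define E where "E = (\<bar>a\<bar>+\<bar>b\<bar>)*d"
  define c where "c = min 0 (a*d)"
  define k where "k t = exp (c + (b-a)*(t-x))" for t
  define K where "K t = integral {x..t} k" for t
  define P where "P t = of_real (exp (c - a*(t-x))) * u t" for t
  define G where "G t = P t - v x * of_real (K t)" for t
  have xT: "x \<in> T" and xdT: "x + d \<in> T" using dpos by (auto simp: T_def)
  have W0: "0 \<le> W" using Wb xT T_def norm_ge_zero order_trans by blast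
  have U0: "0 \<le> U" using Ub xT T_def norm_ge_zero order_trans by blast
  have cle: "c - a*(t-x) \<le> 0" if "t \<in> T" for t
  proof (cases "a \<ge> 0")
    case True then show ?thesis using that by (simp add: c_def T_def mult_nonneg_nonneg)
  next
    case False
    then have "c = a*d" unfolding c_def using dpos mult_neg_pos[of a d] by simp
    moreover have "a*d - a*(t-x) = a*(d-(t-x))" by (simp add: algebra_simps)
    moreover have "a*(d-(t-x)) \<le> 0" using False that by (intro mult_nonpos_nonneg) (auto simp: T_def)
    ultimately show ?thesis by simp
  qed
  have kge: "exp (-E) \<le> k t" if "t \<in> T" for t
  proof -
    have tx: "0 \<le> t - x" "t - x \<le> d" using that by (auto simp: T_def)
    have "-E \<le> c + (b-a)*(t-x)"
    proof (cases "a \<ge> 0")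
      case True
      have "\<bar>(b-a)*(t-x)\<bar> \<le> (\<bar>a\<bar>+\<bar>b\<bar>)*d"
        unfolding abs_mult using tx by (intro mult_mono) auto
      moreover have "c = 0" using True dpos by (simp add: c_def)
      ultimately show ?thesis unfolding E_def by (smt (verit) abs_le_iff)
    next
      case False
      then have "c = a*d" unfolding c_def using dpos mult_neg_pos[of a d] by simp
      have e: "c + (b-a)*(t-x) = a*(d-(t-x)) + b*(t-x)" using \<open>c = a*d\<close> by (simp add: algebra_simps)
      have "\<bar>a*(d-(t-x))\<bar> \<le> \<bar>a\<bar>*d" unfolding abs_mult using tx by (intro mult_left_mono) auto
      moreover have "\<bar>b*(t-x)\<bar> \<le> \<bar>b\<bar>*d" unfolding abs_mult using tx by (intro mult_left_mono) auto
      ultimately show ?thesis unfolding e E_def by (simp add: algebra_simps)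
    qed
    then show ?thesis unfolding k_def by simp
  qed
  have kpos: "0 < k t" for t by (simp add: k_def)
  have contk: "continuous_on S k" for S unfolding k_def by (intro continuous_intros)
  have dK: "(K has_real_derivative k t) (at t within T)" if "t \<in> T" for t
    unfolding K_def T_def by (rule integral_has_real_derivative[OF contk]) (use that T_def in auto)
  have Kx: "K x = 0" by (simp add: K_def)
  have K1: "d * exp (-E) \<le> K (x+d)"
  proof -
    have "integral {x..x+d} (\<lambda>_. exp (-E)) \<le> integral {x..x+d} k"
      by (rule integral_le) (auto intro!: integrable_continuous_interval contk kge simp: T_def)
    then show ?thesis using dpos by (simp add: K_def)
  qed
  have K1pos: "0 < K (x+d)" using K1 dpos by (smt (verit) exp_gt_zero mult_pos_pos)
  have K1': "d \<le> exp E * K (x+d)"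
  proof -
    have "d = exp E * (d * exp (-E))" by (simp add: exp_minus field_simps)
    also have "\<dots> \<le> exp E * K (x+d)" using K1 by (intro mult_left_mono) auto
    finally show ?thesis .
  qed
  have dP: "(P has_vector_derivative of_real (exp (c - a*(t-x))) * v t) (at t within T)" if "t \<in> T" for t
  proof -
    have "((\<lambda>s. of_real (exp (c - a*(s-x)))) has_vector_derivative of_real (exp (c - a*(t-x)) * (-a))) (at t within T)"
      by (auto intro!: derivative_eq_intros)
    from has_vector_derivative_mult[OF this du[rule_format, OF that[unfolded T_def], folded T_def]]
    show ?thesis unfolding P_def
      by (rule has_vector_derivative_eq_rhs) (simp add: algebra_simps)
  qed
  have dG: "(G has_vector_derivative of_real (k t) * (of_real (exp (-b*(t-x))) * v t - v x)) (at t within T)"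
    if "t \<in> T" for t
  proof -
    have "((\<lambda>s. v x * of_real (K s)) has_vector_derivative v x * of_real (k t)) (at t within T)"
      using dK[OF that] by (auto intro!: derivative_eq_intros)
    from has_vector_derivative_diff[OF dP[OF that] this] show ?thesis unfolding G_def
    proof (rule has_vector_derivative_eq_rhs)
      have "exp (c - a*(t-x)) = k t * exp (-b*(t-x))" unfolding k_def
        by (simp add: exp_add[symmetric] algebra_simps)
      then show "of_real (exp (c - a*(t-x))) * v t - v x * of_real (k t) =
          of_real (k t) * (of_real (exp (-b*(t-x))) * v t - v x)"
        by (simp add: algebra_simps)
    qed
  qed
  have atT: "at t within T = at t" if "x < t" "t < x + d" for t
    unfolding T_def using that by (intro at_within_Icc_at) auto
  have contG: "continuous_on {x..x+d} G"
    by (rule continuous_on_vector_derivative) (use dG T_def in blast)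
  have contK: "continuous_on {x..x+d} K"
    by (rule continuous_on_vector_derivative[of _ _ k])
      (use dK T_def has_real_derivative_iff_has_vector_derivative in auto)
  have xlt: "x < x + d" using dpos by simp
  have Gb: "cmod (G (x+d) - G x) \<le> W * d * exp E * K (x+d)"
  proof (cases "b \<ge> 0")
    case True
    have "cmod (G (x+d) - G x) \<le> W*d*K (x+d) - W*d*K x"
    proof (rule differentiable_bound_general[OF xlt contG])
      show "continuous_on {x..x+d} (\<lambda>s. W*d*K s)" by (intro continuous_intros contK)
      fix t assume t: "x < t" "t < x + d"
      then have tT: "t \<in> T" by (auto simp: T_def)
      show "(G has_vector_derivative of_real (k t) * (of_real (exp (-b*(t-x))) * v t - v x)) (at t)"
        using dG[OF tT] atT[OF t] by simp
      show "((\<lambda>s. W*d*K s) has_vector_derivative W*d*k t) (at t)"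
        using dK[OF tT] atT[OF t] 
        by (auto intro!: derivative_eq_intros simp: has_real_derivative_iff_has_vector_derivative[symmetric])
      have q: "cmod (of_real (exp (-b*(t-x))) * v t - v x) \<le> W * exp (max 0 (-b*(t-x))) * (t-x)"
        by (rule Q_bound[OF _ _ dv Wb]) (use t in auto)
      have "max 0 (-b*(t-x)) = 0" using True t by (simp add: mult_nonneg_nonneg)
      with q have q': "cmod (of_real (exp (-b*(t-x))) * v t - v x) \<le> W * d"
        using t W0 by (smt (verit) mult_left_mono mult_cancel_left1 exp_zero)
      have "cmod (of_real (k t) * (of_real (exp (-b*(t-x))) * v t - v x)) = k t * cmod (of_real (exp (-b*(t-x))) * v t - v x)"
        using kpos[of t] by (simp add: norm_mult)
      also have "\<dots> \<le> k t * (W * d)" using q' kpos[of t] by (intro mult_left_mono) auto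
      finally show "cmod (of_real (k t) * (of_real (exp (-b*(t-x))) * v t - v x)) \<le> W*d*k t"
        by (simp add: algebra_simps)
    qed
    also have "\<dots> = W*d*K (x+d)" using Kx by simp
    also have "\<dots> \<le> W*d*exp E*K(x+d)"
    proof -
      have "0 \<le> E" unfolding E_def using dpos by simp
      then have "1 \<le> exp E" by simp
      then have "W*d*1 \<le> W*d*exp E" using W0 dpos by (intro mult_left_mono) auto
      then show ?thesis using K1pos by (intro mult_right_mono) auto
    qed
    finally show ?thesis .
  next
    case False
    have "cmod (G (x+d) - G x) \<le> W*d*(x+d) - W*d*x"
    proof (rule differentiable_bound_general[OF xlt contG])
      show "continuous_on {x..x+d} (\<lambda>y. W*d*y)" by (intro continuous_intros)
      fix t assume t: "x < t" "t < x + d"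
      then have tT: "t \<in> T" by (auto simp: T_def)
      show "(G has_vector_derivative of_real (k t) * (of_real (exp (-b*(t-x))) * v t - v x)) (at t)"
        using dG[OF tT] atT[OF t] by simp
      show "((\<lambda>y. W*d*y) has_vector_derivative W*d) (at t)"
        by (auto intro!: derivative_eq_intros simp: has_real_derivative_iff_has_vector_derivative[symmetric])
      have q: "cmod (of_real (exp (-b*(t-x))) * v t - v x) \<le> W * exp (max 0 (-b*(t-x))) * (t-x)"
        by (rule Q_bound[OF _ _ dv Wb]) (use t in auto)
      have "max 0 (-b*(t-x)) = -b*(t-x)" using False t mult_neg_pos[of b "t-x"] by simp
      with q have q': "cmod (of_real (exp (-b*(t-x))) * v t - v x) \<le> W * exp (-b*(t-x)) * d"
        using t W0 by (smt (verit) mult_left_mono exp_gt_zero mult_nonneg_nonneg)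
      have ke: "k t * exp (-b*(t-x)) = exp (c - a*(t-x))" unfolding k_def
        by (simp add: exp_add[symmetric] algebra_simps)
      have "cmod (of_real (k t) * (of_real (exp (-b*(t-x))) * v t - v x)) = k t * cmod (of_real (exp (-b*(t-x))) * v t - v x)"
        using kpos[of t] by (simp add: norm_mult)
      also have "\<dots> \<le> k t * (W * exp (-b*(t-x)) * d)" using q' kpos[of t] by (intro mult_left_mono) auto
      also have "\<dots> = exp (c - a*(t-x)) * (W*d)" using ke by (simp add: algebra_simps)
      also have "\<dots> \<le> 1 * (W*d)" using cle[OF tT] W0 dpos by (intro mult_right_mono) auto
      finally show "cmod (of_real (k t) * (of_real (exp (-b*(t-x))) * v t - v x)) \<le> W*d" by simp
    qed
    also have "\<dots> = W*d*d" by (simp add: algebra_simps)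
    also have "\<dots> \<le> W*d*(exp E * K (x+d))" using K1' W0 dpos by (intro mult_left_mono) auto
    finally show ?thesis by (simp add: algebra_simps)
  qed
  have Pb: "cmod (P t) \<le> U" if "t \<in> T" for t
  proof -
    have "cmod (P t) = exp (c - a*(t-x)) * cmod (u t)" by (simp add: P_def norm_mult)
    also have "\<dots> \<le> 1 * U" using cle[OF that] Ub that T_def by (intro mult_mono) auto
    finally show ?thesis by simp
  qed
  have ident: "v x * of_real (K (x+d)) = P (x+d) - P x - (G (x+d) - G x)"
    by (simp add: G_def Kx)
  have "cmod (v x) * K (x+d) = cmod (v x * of_real (K (x+d)))"
    using K1pos by (simp add: norm_mult)
  also have "\<dots> \<le> cmod (P (x+d)) + cmod (P x) + cmod (G (x+d) - G x)"
    unfolding ident by (rule order_trans[OF norm_triangle_ineq4]) (simp add: norm_triangle_ineq4 add_mono)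
  also have "\<dots> \<le> 2*U + W*d*exp E*K (x+d)" using Pb[OF xT] Pb[OF xdT] Gb by simp
  finally have main: "cmod (v x) * K (x+d) \<le> 2*U + W*d*exp E*K (x+d)" .
  then have "cmod (v x) \<le> 2*U / K (x+d) + W*d*exp E"
    using K1pos by (simp add: field_simps)
  also have "2*U / K (x+d) \<le> 2*U*exp E/d"
  proof -
    have "2*U / K (x+d) \<le> 2*U / (d/exp E)"
      using K1' K1pos dpos U0 by (intro divide_left_mono) (auto simp: field_simps)
    then show ?thesis by (simp add: field_simps)
  qed
  finally show ?thesis by (simp add: E_def algebra_simps)
qed


lemma sup_bound:
  assumes "lo < hi" "sm {lo..hi} h" "{p..q} \<subseteq> {lo..hi}" "s \<in> {p..q}"
  shows "cmod (h s) \<le> (SUP t\<in>{p..q}. cmod (h t))"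
proof -
  have "continuous_on {lo..hi} h"
    by (rule continuous_on_vector_derivative) (use sm_deriv[OF assms(1,2)] in blast)
  then have "continuous_on {p..q} h" using assms(3) continuous_on_subset by blast
  then have "continuous_on {p..q} (\<lambda>t. cmod (h t))" by (intro continuous_intros)
  then have "compact ((\<lambda>t. cmod (h t)) ` {p..q})" by (intro compact_continuous_image) auto
  then have "bdd_above ((\<lambda>t. cmod (h t)) ` {p..q})" by (intro bounded_imp_bdd_above compact_imp_bounded)
  then show ?thesis using assms(4) by (intro cSUP_upper)
qed

theorem mainTheorem20:
  fixes lam :: "nat \<Rightarrow> real" and \<gamma> \<delta> x0 :: real and f :: "real \<Rightarrow> complex"
  assumes "\<gamma> > 0"
    and "smooth_on_interval x0 (x0 + \<gamma>) f"
    and "0 < 2 * \<delta>" and "2 * \<delta> < \<gamma>"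
  shows "\<forall>m::nat. \<forall>x\<in>{x0..x0+\<delta>}.
    cmod (Dop lam {x0..x0+\<gamma>} (2*m+1) f x)
      \<le> 2 * max (2 / \<delta>) \<delta> * exp ((\<bar>lam (2*m)\<bar> + \<bar>lam (2*m+1)\<bar>) * \<delta>) *
         ((SUP t\<in>{x0..x0+2*\<delta>}. cmod (Dop lam {x0..x0+\<gamma>} (2*m) f t))
          + (SUP t\<in>{x0..x0+2*\<delta>}. cmod (Dop lam {x0..x0+\<gamma>} (2*m+2) f t)))"
proof (intro allI ballI)
  fix m :: nat and x assume x: "x \<in> {x0..x0+\<delta>}"
  define S where "S = {x0..x0+\<gamma>}"
  define R where "R = {x0..x0+2*\<delta>}"
  define T where "T = {x..x+\<delta>}"
  have lohi: "x0 < x0 + \<gamma>" using assms by simp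
  have dpos: "\<delta> > 0" using assms by simp
  have smf: "sm S f" using assms(2) unfolding smooth_on_interval_def sm_def S_def by metis
  define u where "u = Dop lam S (2*m) f"
  define v where "v = Dop lam S (2*m+1) f"
  define w where "w = Dop lam S (2*m+2) f"
  define a where "a = lam (2*m)"
  define b where "b = lam (2*m+1)"
  have RS: "R \<subseteq> S" using assms unfolding R_def S_def by auto
  have TR: "T \<subseteq> R" using x unfolding T_def R_def by auto
  have smu: "sm S u" unfolding u_def S_def by (rule sm_Dop[OF lohi smf[unfolded S_def]])
  have smv: "sm S v" unfolding v_def S_def by (rule sm_Dop[OF lohi smf[unfolded S_def]])
  have smw: "sm S w" unfolding w_def S_def by (rule sm_Dop[OF lohi smf[unfolded S_def]])
  have lu: "\<forall>s\<in>S. v s = vector_derivative u (at s within S) - of_real a * u s"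
    using Dop_last[OF lohi smf[unfolded S_def], of lam "2*m"] unfolding u_def v_def a_def S_def by simp
  have lv: "\<forall>s\<in>S. w s = vector_derivative v (at s within S) - of_real b * v s"
    using Dop_last[OF lohi smf[unfolded S_def], of lam "2*m+1"] unfolding w_def v_def b_def S_def
    by (simp add: numeral_2_eq_2)
  have du: "\<forall>s\<in>T. (u has_vector_derivative (v s + of_real a * u s)) (at s within T)"
  proof
    fix s assume s: "s \<in> T"
    then have sS: "s \<in> S" using TR RS by auto
    have "(u has_vector_derivative vector_derivative u (at s within S)) (at s within S)"
      using sm_deriv[OF lohi smu[unfolded S_def] sS[unfolded S_def]] unfolding S_def .
    then have "(u has_vector_derivative (v s + of_real a * u s)) (at s within S)"
      using lu sS by simp
    then show "(u has_vector_derivative (v s + of_real a * u s)) (at s within T)"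
      by (rule has_vector_derivative_within_subset) (use TR RS in auto)
  qed
  have dv: "\<forall>s\<in>T. (v has_vector_derivative (w s + of_real b * v s)) (at s within T)"
  proof
    fix s assume s: "s \<in> T"
    then have sS: "s \<in> S" using TR RS by auto
    have "(v has_vector_derivative vector_derivative v (at s within S)) (at s within S)"
      using sm_deriv[OF lohi smv[unfolded S_def] sS[unfolded S_def]] unfolding S_def .
    then have "(v has_vector_derivative (w s + of_real b * v s)) (at s within S)"
      using lv sS by simp
    then show "(v has_vector_derivative (w s + of_real b * v s)) (at s within T)"
      by (rule has_vector_derivative_within_subset) (use TR RS in auto)
  qed
  define U where "U = (SUP t\<in>R. cmod (u t))"
  define W where "W = (SUP t\<in>R. cmod (w t))"
  have Ub: "\<forall>s\<in>T. cmod (u s) \<le> U"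
    using sup_bound[OF lohi smu[unfolded S_def]] RS TR unfolding U_def R_def S_def by blast
  have Wb: "\<forall>s\<in>T. cmod (w s) \<le> W"
    using sup_bound[OF lohi smw[unfolded S_def]] RS TR unfolding W_def R_def S_def by blast
  have xT: "x \<in> T" using dpos by (simp add: T_def)
  have U0: "0 \<le> U" using Ub xT norm_ge_zero order_trans by blast
  have W0: "0 \<le> W" using Wb xT norm_ge_zero order_trans by blast
  define e where "e = exp ((\<bar>a\<bar>+\<bar>b\<bar>)*\<delta>)"
  have e0: "0 < e" by (simp add: e_def)
  have c: "cmod (v x) \<le> 2*U*e/\<delta> + \<delta>*W*e"
    using core[OF dpos du[unfolded T_def] dv[unfolded T_def] Ub[unfolded T_def] Wb[unfolded T_def]]
    unfolding e_def .
  have m1: "2*U*e/\<delta> \<le> 2 * max (2/\<delta>) \<delta> * e * U"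
  proof -
    have "2*U*e/\<delta> = 2*(1/\<delta>)*e*U" by simp
    also have "\<dots> \<le> 2 * max (2/\<delta>) \<delta> * e * U"
      using dpos e0 U0 by (intro mult_right_mono mult_left_mono) (auto simp: divide_right_mono)
    finally show ?thesis .
  qed
  have m2: "\<delta>*W*e \<le> 2 * max (2/\<delta>) \<delta> * e * W"
  proof -
    have "\<delta>*W*e = 1*\<delta>*e*W" by simp
    also have "\<dots> \<le> 2 * max (2/\<delta>) \<delta> * e * W"
      using dpos e0 W0 by (intro mult_right_mono) auto
    finally show ?thesis .
  qed
  have "cmod (v x) \<le> 2 * max (2/\<delta>) \<delta> * e * (U + W)"
    using c m1 m2 by (simp add: distrib_left)
  then show "cmod (Dop lam {x0..x0+\<gamma>} (2*m+1) f x)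
      \<le> 2 * max (2 / \<delta>) \<delta> * exp ((\<bar>lam (2*m)\<bar> + \<bar>lam (2*m+1)\<bar>) * \<delta>) *
         ((SUP t\<in>{x0..x0+2*\<delta>}. cmod (Dop lam {x0..x0+\<gamma>} (2*m) f t))
          + (SUP t\<in>{x0..x0+2*\<delta>}. cmod (Dop lam {x0..x0+\<gamma>} (2*m+2) f t)))"
    unfolding v_def u_def w_def U_def W_def e_def a_def b_def R_def S_def .
qed

end
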